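(* Let $|\psi\rangle=\sum_{i_1,\dots,i_N}\mathrm{Tr}[A^{[1],i_1}\cdots A^{[N],i_N}]|i_1\dots i_N\rangle$ be a (not necessarily translationally invariant) MPS on a sufficiently large number $N$ of sites in which every tensor $A^{[n]}$ is injective, and suppose $|\psi\rangle$ has the exact MPS-up$_{0,D}$ property. Then $\prod_{i=i_0}^{N}D_{[i]}\le D$, where $i_0=1$ if $N$ is even and $i_0=2$ if $N$ is odd (so $|\psi\rangle$ is a product over almost all sites).
   Context: Here $A^{[n],i}$ ($i=1,\dots,d$) are $D_{[n]}\times D_{[n+1]}$ complex matrices with $D_{[N+1]}=D_{[1]}$; thus $D_{[n]}$ is the dimension of the virtual bond between site $n-1$ and site $n$ (cyclically). The tensor $A^{[n]}$ is injective if the linear map $X\mapsto\sum_{i=1}^d\mathrm{Tr}[XA^{[n],i}]|i\rangle$ from $\mathcal{M}_{D_{[n+1]}\times D_{[n]}}(\mathbb{C})$ to $\mathbb{C}^d$ is injective (equivalently, it has a left inverse). A state is an exact MPS-up$_{0,D}$ if for every permutation $\pi$ of its $N$ sites, $U_\pi|\psi\rangle$ (with $U_\pi$ the unitary permuting the tensor factors) is equal to an MPS with bond dimensions at most $D$; equivalently, its Schmidt rank across every bipartition of the sites is at most $D$. *)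

theory Defs
  imports "Jordan_Normal_Form.Matrix"
begin

text \<open>Sites are indexed 0,...,N-1 (site n here is site n+1 of the paper).
  Dim n is the bond dimension to the left of site n, i.e. Dim n = D_[n+1];
  the bond to the right of site n is Dim ((n+1) mod N).
  A n i is the D_[n] x D_[n+1] matrix A^[n],i, for physical index i < d.\<close>

definition mps_tensors_ok ::
  "nat \<Rightarrow> nat \<Rightarrow> (nat \<Rightarrow> nat) \<Rightarrow> (nat \<Rightarrow> nat \<Rightarrow> complex mat) \<Rightarrow> bool" where
  "mps_tensors_ok N d Dim A \<longleftrightarrow>
     (\<forall>n<N. \<forall>i<d. A n i \<in> carrier_mat (Dim n) (Dim (Suc n mod N)))"

definition mat_trace :: "complex mat \<Rightarrow> complex" where
  "mat_trace M = (\<Sum>i<dim_row M. M $$ (i, i))"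

definition mps_coeff ::
  "nat \<Rightarrow> (nat \<Rightarrow> nat) \<Rightarrow> (nat \<Rightarrow> nat \<Rightarrow> complex mat) \<Rightarrow> (nat \<Rightarrow> nat) \<Rightarrow> complex" where
  "mps_coeff N Dim A idx = mat_trace (foldl (\<lambda>M k. M * A k (idx k)) (1\<^sub>m (Dim 0)) [0..<N])"

definition injective_tensor ::
  "nat \<Rightarrow> nat \<Rightarrow> (nat \<Rightarrow> nat) \<Rightarrow> (nat \<Rightarrow> nat \<Rightarrow> complex mat) \<Rightarrow> nat \<Rightarrow> bool" where
  "injective_tensor N d Dim A n \<longleftrightarrow>
     (\<forall>X \<in> carrier_mat (Dim (Suc n mod N)) (Dim n).
        (\<forall>i<d. mat_trace (X * A n i) = 0) \<longrightarrow> X = 0\<^sub>m (Dim (Suc n mod N)) (Dim n))"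

definition restr :: "nat set \<Rightarrow> (nat \<Rightarrow> nat) \<Rightarrow> (nat \<Rightarrow> nat)" where
  "restr S idx = (\<lambda>k. if k \<in> S then idx k else 0)"

definition schmidt_rank_le ::
  "nat \<Rightarrow> nat \<Rightarrow> ((nat \<Rightarrow> nat) \<Rightarrow> complex) \<Rightarrow> nat set \<Rightarrow> nat \<Rightarrow> bool" where
  "schmidt_rank_le N d psi S r \<longleftrightarrow>
     (\<exists>f g :: nat \<Rightarrow> (nat \<Rightarrow> nat) \<Rightarrow> complex.
        \<forall>idx. (\<forall>k<N. idx k < d) \<longrightarrow>
          psi idx = (\<Sum>j<r. f j (restr S idx) * g j (restr ({0..<N} - S) idx)))"

definition exact_MPS_up ::
  "nat \<Rightarrow> nat \<Rightarrow> ((nat \<Rightarrow> nat) \<Rightarrow> complex) \<Rightarrow> nat \<Rightarrow> bool" where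
  "exact_MPS_up N d psi D \<longleftrightarrow> (\<forall>S \<subseteq> {0..<N}. schmidt_rank_le N d psi S D)"

end

theory Submission
  imports Defs "HOL-Library.Function_Algebras"
begin

lemma sum_fun_app: "(sum f A) x = (\<Sum>a\<in>A. f a x)"
  by (induct A rule: infinite_finite_induct) auto

definition sc :: "complex \<Rightarrow> ('x \<Rightarrow> complex) \<Rightarrow> ('x \<Rightarrow> complex)" where
  "sc c f = (\<lambda>x. c * f x)"

lemma vs_sc: "vector_space sc"
  by unfold_locales (auto simp: sc_def fun_eq_iff algebra_simps)

lemma vsp_sc: "vector_space_pair sc ((*) :: complex \<Rightarrow> complex \<Rightarrow> complex)"
  unfolding vector_space_pair_def
  using vs_sc[unfolded vector_space_def]
  by (auto simp: vector_space_def algebra_simps)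

interpretation fvs: vector_space "sc :: complex \<Rightarrow> (nat \<Rightarrow> complex) \<Rightarrow> _" by (rule vs_sc)

definition ev :: "nat \<Rightarrow> nat \<Rightarrow> complex" where "ev j = (\<lambda>x. if x = j then 1 else 0)"

lemma in_span_ev:
  assumes "\<forall>x\<ge>D. v x = 0"
  shows "v \<in> fvs.span (ev ` {..<D})"
proof -
  have "v = (\<Sum>j<D. sc (v j) (ev j))"
  proof
    fix x
    have "(\<Sum>j<D. sc (v j) (ev j)) x = (\<Sum>a<D. if x = a then v a else 0)"
      by (simp add: sum_fun_app sc_def ev_def if_distrib cong: if_cong)
    also have "\<dots> = v x" using assms by (auto simp: not_less)
    finally show "v x = (\<Sum>j<D. sc (v j) (ev j)) x" by simp
  qed
  also have "\<dots> \<in> fvs.span (ev ` {..<D})"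
    by (intro fvs.span_sum fvs.span_scale fvs.span_base) auto
  finally show ?thesis .
qed

lemma count_bound:
  fixes F G :: "nat \<Rightarrow> 'a \<Rightarrow> complex"
  assumes fin: "finite T"
    and id: "\<And>t s. t \<in> T \<Longrightarrow> s \<in> T \<Longrightarrow> (\<Sum>j<D. F j t * G j s) = (if t = s then 1 else 0)"
  shows "card T \<le> D"
proof -
  define r where "r t = (\<lambda>j. if j < D then F j t else 0)" for t
  have inj: "inj_on r T"
  proof (rule inj_onI)
    fix t t' assume t: "t \<in> T" "t' \<in> T" "r t = r t'"
    have "\<forall>j<D. F j t = F j t'"
    proof (intro allI impI)
      fix j assume "j < D" then show "F j t = F j t'" using fun_cong[OF t(3), of j] by (simp add: r_def)
    qed
    then have "(\<Sum>j<D. F j t * G j t) = (\<Sum>j<D. F j t' * G j t)" by simp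
    then show "t = t'" using id[of t t] id[of t' t] t by (auto split: if_splits)
  qed
  have sp: "r ` T \<subseteq> fvs.span (ev ` {..<D})"
    by (auto intro!: in_span_ev simp: r_def)
  have ind: "fvs.independent (r ` T)"
  proof (unfold fvs.independent_explicit_module, intro allI impI)
    fix U u v assume U: "finite U" "U \<subseteq> r ` T" "(\<Sum>v\<in>U. sc (u v) v) = 0" "v \<in> U"
    obtain s0 where s0: "s0 \<in> T" "v = r s0" using U by auto
    define T' where "T' = T \<inter> r -` U"
    have U': "U = r ` T'" using U(2) by (auto simp: T'_def)
    have injT': "inj_on r T'" using inj by (rule inj_on_subset) (auto simp: T'_def)
    have s0T': "s0 \<in> T'" using s0 U by (auto simp: T'_def)
    have z: "(\<Sum>t\<in>T'. u (r t) * F j t) = 0" if "j < D" for j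
    proof -
      have "0 = (\<Sum>v\<in>U. sc (u v) v) j" using U(3) by simp
      also have "\<dots> = (\<Sum>t\<in>T'. u (r t) * r t j)"
        by (simp add: U' sum.reindex[OF injT'] sum_fun_app sc_def)
      finally show ?thesis using that by (simp add: r_def)
    qed
    have "0 = (\<Sum>j<D. (\<Sum>t\<in>T'. u (r t) * F j t) * G j s0)" using z by simp
    also have "\<dots> = (\<Sum>t\<in>T'. u (r t) * (\<Sum>j<D. F j t * G j s0))"
      by (simp add: sum_distrib_left sum_distrib_right sum.swap[of _ T'] mult.assoc)
    also have "\<dots> = (\<Sum>t\<in>T'. if t = s0 then u (r t) else 0)"
      by (intro sum.cong refl) (use id s0 in \<open>auto simp: T'_def\<close>)
    also have "\<dots> = u (r s0)"
      using s0T' fin by (simp add: T'_def)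
    finally show "u v = 0" using s0 by simp
  qed
  have "card (r ` T) \<le> card (ev ` {..<D})"
    using fvs.independent_span_bound[OF _ ind sp] by auto
  also have "\<dots> \<le> D" using card_image_le[of "{..<D}" ev] by simp
  finally show ?thesis using card_image[OF inj] by simp
qed

lemma ev_expand:
  assumes "\<forall>x\<ge>D. v x = 0"
  shows "v = (\<Sum>j<D. sc (v j) (ev j))"
proof
  fix x
  have "(\<Sum>j<D. sc (v j) (ev j)) x = (\<Sum>a<D. if x = a then v a else 0)"
    by (simp add: sum_fun_app sc_def ev_def if_distrib cong: if_cong)
  also have "\<dots> = v x" using assms by (auto simp: not_less)
  finally show "v x = (\<Sum>j<D. sc (v j) (ev j)) x" by simp
qed

lemma dual_surj:
  fixes a :: "'u \<Rightarrow> nat \<Rightarrow> complex"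
  assumes fin: "finite U"
    and injd: "\<And>X. \<forall>i<d. (\<Sum>u\<in>U. X u * a u i) = 0 \<Longrightarrow> \<forall>u\<in>U. X u = 0"
    and u0: "u0 \<in> U"
  shows "\<exists>c. \<forall>u\<in>U. (\<Sum>i<d. c i * a u i) = (if u = u0 then 1 else 0)"
proof -
  define r where "r u = (\<lambda>i. if i < d then a u i else 0)" for u
  have inj: "inj_on r U"
  proof (rule inj_onI, rule ccontr)
    fix u u' assume t: "u \<in> U" "u' \<in> U" "r u = r u'" "u \<noteq> u'"
    define X where "X w = (if w = u then 1 else if w = u' then -1 else (0::complex))" for w
    have "\<forall>i<d. (\<Sum>w\<in>U. X w * a w i) = 0"
    proof (intro allI impI)
      fix i assume i: "i < d"
      have "(\<Sum>w\<in>U. X w * a w i) = (\<Sum>w\<in>U. (if w = u then a u i else 0) - (if w = u' then a u' i else 0))"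
        by (intro sum.cong refl) (use t in \<open>auto simp: X_def\<close>)
      also have "\<dots> = a u i - a u' i" using t fin by (simp add: sum_subtractf)
      also have "\<dots> = 0" using fun_cong[OF t(3), of i] i by (simp add: r_def)
      finally show "(\<Sum>w\<in>U. X w * a w i) = 0" .
    qed
    from injd[OF this] t show False by (auto simp: X_def)
  qed
  have ind: "fvs.independent (r ` U)"
  proof (unfold fvs.independent_explicit_module, intro allI impI)
    fix V u v assume V: "finite V" "V \<subseteq> r ` U" "(\<Sum>v\<in>V. sc (u v) v) = 0" "v \<in> V"
    obtain s0 where s0: "s0 \<in> U" "v = r s0" using V by auto
    define U' where "U' = U \<inter> r -` V"
    have V': "V = r ` U'" using V(2) by (auto simp: U'_def)
    have injU': "inj_on r U'" using inj by (rule inj_on_subset) (auto simp: U'_def)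
    define X where "X w = (if w \<in> U' then u (r w) else 0)" for w
    have "\<forall>i<d. (\<Sum>w\<in>U. X w * a w i) = 0"
    proof (intro allI impI)
      fix i assume i: "i < d"
      have "(\<Sum>w\<in>U. X w * a w i) = (\<Sum>w\<in>U'. u (r w) * a w i)"
      proof -
        have "(\<Sum>w\<in>U. X w * a w i) = (\<Sum>w\<in>U. if w \<in> U' then u (r w) * a w i else 0)"
          by (intro sum.cong) (auto simp: X_def)
        also have "\<dots> = (\<Sum>w\<in>U \<inter> U'. u (r w) * a w i)" using sum.inter_restrict[OF fin, of "\<lambda>w. u (r w) * a w i" U'] by simp
        also have "U \<inter> U' = U'" by (auto simp: U'_def)
        finally show ?thesis .
      qed
      also have "\<dots> = (\<Sum>w\<in>U'. u (r w) * r w i)" using i by (simp add: r_def)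
      also have "\<dots> = (\<Sum>v\<in>V. sc (u v) v) i"
        by (simp add: V' sum.reindex[OF injU'] sum_fun_app sc_def)
      also have "\<dots> = 0" using V(3) by simp
      finally show "(\<Sum>w\<in>U. X w * a w i) = 0" .
    qed
    from injd[OF this] s0 V(4) show "u v = 0" by (auto simp: X_def U'_def)
  qed
  interpret vp: vector_space_pair "sc :: complex \<Rightarrow> (nat \<Rightarrow> complex) \<Rightarrow> _" "(*) :: complex \<Rightarrow> _"
    by (rule vsp_sc)
  obtain g where g: "Vector_Spaces.linear sc ((*) :: complex \<Rightarrow> _) g"
    "\<forall>x\<in>r ` U. g x = (if x = r u0 then 1 else 0)"
    using vp.linear_independent_extend[OF ind, of "\<lambda>x. if x = r u0 then 1 else 0"] by blast
  have mh: "module_hom sc ((*) :: complex \<Rightarrow> _) g" using g(1) by (simp add: module_hom_iff_linear)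
  show ?thesis
  proof (intro exI ballI)
    fix u assume u: "u \<in> U"
    have ru: "r u = (\<Sum>j<d. sc (r u j) (ev j))" by (rule ev_expand) (simp add: r_def)
    have "g (r u) = g (\<Sum>j<d. sc (r u j) (ev j))" by (subst ru) (rule refl)
    also have "\<dots> = (\<Sum>j<d. g (sc (r u j) (ev j)))" by (rule module_hom.sum[OF mh])
    also have "\<dots> = (\<Sum>j<d. r u j * g (ev j))" by (simp add: module_hom.scale[OF mh])
    also have "\<dots> = (\<Sum>j<d. g (ev j) * a u j)" by (simp add: r_def mult.commute)
    finally have "(\<Sum>j<d. g (ev j) * a u j) = g (r u)" by simp
    also have "\<dots> = (if u = u0 then 1 else 0)"
      using g(2) u u0 inj by (auto simp: inj_on_eq_iff)
    finally show "(\<Sum>i<d. g (ev i) * a u i) = (if u = u0 then 1 else 0)" .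
  qed
qed


lemma mult_entry:
  assumes "A \<in> carrier_mat a b" "B \<in> carrier_mat b c" "i < a" "j < c"
  shows "(A * B) $$ (i, j) = (\<Sum>x<b. A $$ (i, x) * B $$ (x, j))"
  using assms by (auto simp: scalar_prod_def atLeast0LessThan intro!: sum.cong)

lemma foldl_carrier:
  assumes "\<forall>k<m. As k \<in> carrier_mat (e k) (e (Suc k))" "M0 \<in> carrier_mat r0 (e 0)"
  shows "foldl (\<lambda>M k. M * As k) M0 [0..<m] \<in> carrier_mat r0 (e m)"
  using assms by (induct m) auto

lemma foldl_upt_Suc: "foldl f a [0..<Suc m] = f (foldl f a [0..<m]) m"
  by simp

lemma multilin:
  fixes A :: "nat \<Rightarrow> nat \<Rightarrow> complex mat" and w :: "nat \<Rightarrow> nat \<Rightarrow> complex"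
  assumes A: "\<forall>k<m. \<forall>i<d. A k i \<in> carrier_mat (e k) (e (Suc k))"
    and B: "\<forall>k<m. B k \<in> carrier_mat (e k) (e (Suc k)) \<and>
       (\<forall>x<e k. \<forall>y<e (Suc k). B k $$ (x,y) = (\<Sum>i<d. w k i * A k i $$ (x,y)))"
    and M0: "M0 \<in> carrier_mat r0 (e 0)" and r: "r < r0" and c: "c < e m"
  shows "foldl (\<lambda>M k. M * B k) M0 [0..<m] $$ (r,c) =
    (\<Sum>idx\<in>PiE {..<m} (\<lambda>_. {..<d}). (\<Prod>n<m. w n (idx n)) *
        foldl (\<lambda>M k. M * A k (idx k)) M0 [0..<m] $$ (r,c))"
  using A B c
proof (induct m arbitrary: c)
  case 0
  then show ?case by simp
next
  case (Suc m)
  define C where "C = PiE {..<m} (\<lambda>_. {..<d})"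
  define PA where "PA g = foldl (\<lambda>M k. M * A k (g k)) M0 [0..<m]" for g
  define W where "W g = (\<Prod>n<m. w n (g n))" for g
  have PBc: "foldl (\<lambda>M k. M * B k) M0 [0..<m] \<in> carrier_mat r0 (e m)"
    by (rule foldl_carrier) (use Suc.prems M0 in auto)
  have PAc: "PA g \<in> carrier_mat r0 (e m)" if "g \<in> C" for g
    unfolding PA_def
  proof (rule foldl_carrier)
    show "\<forall>k<m. A k (g k) \<in> carrier_mat (e k) (e (Suc k))"
      using Suc.prems(1) that PiE_mem[of g "{..<m}" "\<lambda>_. {..<d}"] by (auto simp: C_def)
  qed (rule M0)
  have Bm: "B m \<in> carrier_mat (e m) (e (Suc m))" using Suc.prems by auto
  have "foldl (\<lambda>M k. M * B k) M0 [0..<Suc m] $$ (r,c) =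
      (\<Sum>x<e m. foldl (\<lambda>M k. M * B k) M0 [0..<m] $$ (r,x) * B m $$ (x,c))"
    unfolding foldl_upt_Suc by (rule mult_entry[OF PBc Bm r Suc.prems(3)])
  also have "\<dots> = (\<Sum>x<e m. (\<Sum>g\<in>C. W g * PA g $$ (r,x)) * (\<Sum>i<d. w m i * A m i $$ (x,c)))"
  proof (intro sum.cong refl)
    fix x assume x: "x \<in> {..<e m}"
    have h1: "foldl (\<lambda>M k. M * B k) M0 [0..<m] $$ (r,x) = (\<Sum>g\<in>C. W g * PA g $$ (r,x))"
      unfolding C_def W_def PA_def by (rule Suc.hyps) (use Suc.prems x in auto)
    have h2: "B m $$ (x,c) = (\<Sum>i<d. w m i * A m i $$ (x,c))"
      using Suc.prems(2) x Suc.prems(3) by auto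
    show "foldl (\<lambda>M k. M * B k) M0 [0..<m] $$ (r,x) * B m $$ (x,c) =
      (\<Sum>g\<in>C. W g * PA g $$ (r,x)) * (\<Sum>i<d. w m i * A m i $$ (x,c))"
      by (simp only: h1 h2)
  qed
  also have "\<dots> = (\<Sum>x<e m. \<Sum>g\<in>C. \<Sum>i<d. W g * PA g $$ (r,x) * (w m i * A m i $$ (x,c)))"
    by (simp only: sum_product)
  also have "\<dots> = (\<Sum>x<e m. \<Sum>i<d. \<Sum>g\<in>C. W g * PA g $$ (r,x) * (w m i * A m i $$ (x,c)))"
    by (intro sum.cong refl sum.swap)
  also have "\<dots> = (\<Sum>i<d. \<Sum>x<e m. \<Sum>g\<in>C. W g * PA g $$ (r,x) * (w m i * A m i $$ (x,c)))"
    by (rule sum.swap)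
  also have "\<dots> = (\<Sum>i<d. \<Sum>g\<in>C. \<Sum>x<e m. W g * PA g $$ (r,x) * (w m i * A m i $$ (x,c)))"
    by (intro sum.cong refl sum.swap)
  also have "\<dots> = (\<Sum>(i,g)\<in>{..<d} \<times> C. (\<Prod>n<Suc m. w n ((g(m:=i)) n)) *
        foldl (\<lambda>M k. M * A k ((g(m:=i)) k)) M0 [0..<Suc m] $$ (r,c))"
    unfolding sum.cartesian_product[symmetric]
  proof (intro sum.cong refl)
    fix i g assume i: "i \<in> {..<d}" and g: "g \<in> C"
    have 0: "(\<Prod>n<m. w n ((g(m:=i)) n)) = W g"
      unfolding W_def by (intro prod.cong) auto
    have 1: "(\<Prod>n<Suc m. w n ((g(m:=i)) n)) = W g * w m i"
      using 0 by (simp add: lessThan_Suc mult.commute)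
    have 2: "foldl (\<lambda>M k. M * A k ((g(m:=i)) k)) M0 [0..<m] = PA g"
      unfolding PA_def by (rule foldl_cong) auto
    have Am: "A m i \<in> carrier_mat (e m) (e (Suc m))" using Suc.prems i by auto
    show "(\<Sum>x<e m. W g * PA g $$ (r,x) * (w m i * A m i $$ (x,c))) =
        (\<Prod>n<Suc m. w n ((g(m := i)) n)) * foldl (\<lambda>M k. M * A k ((g(m := i)) k)) M0 [0..<Suc m] $$ (r, c)"
      unfolding 1 foldl_upt_Suc 2 using mult_entry[OF PAc[OF g] Am r Suc.prems(3)]
      by (simp add: sum_distrib_left mult_ac)
  qed
  also have "\<dots> = (\<Sum>idx\<in>PiE {..<Suc m} (\<lambda>_. {..<d}). (\<Prod>n<Suc m. w n (idx n)) *
        foldl (\<lambda>M k. M * A k (idx k)) M0 [0..<Suc m] $$ (r,c))"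
  proof -
    have eq: "PiE {..<Suc m} (\<lambda>_. {..<d}) = (\<lambda>(y, g). g(m := y)) ` ({..<d} \<times> C)"
      unfolding C_def lessThan_Suc by (rule PiE_insert_eq)
    have inj: "inj_on (\<lambda>(y, g). g(m := y)) ({..<d} \<times> C)"
      unfolding C_def using inj_combinator[of m "{..<m}" "\<lambda>_. {..<d}"] by simp
    show ?thesis unfolding eq sum.reindex[OF inj] by (simp add: case_prod_beta)
  qed
  finally show ?case .
qed


lemma unit_prod:
  fixes E :: "nat \<Rightarrow> complex mat"
  assumes E: "\<forall>k<m. E k \<in> carrier_mat (e k) (e (Suc k)) \<and>
      (\<forall>x<e k. \<forall>y<e (Suc k). E k $$ (x,y) = (if x = \<alpha> k \<and> y = \<beta> k then 1 else 0))"
    and bb: "\<forall>k<m. \<beta> k < e (Suc k)"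
    and m: "0 < m" and r: "r < e 0" and c: "c < e m"
  shows "foldl (\<lambda>M k. M * E k) (1\<^sub>m (e 0)) [0..<m] $$ (r,c) =
     (if r = \<alpha> 0 \<and> c = \<beta> (m - 1) \<and> (\<forall>k. Suc k < m \<longrightarrow> \<beta> k = \<alpha> (Suc k)) then 1 else 0)"
  using E bb m c
proof (induct m arbitrary: c)
  case 0
  then show ?case by simp
next
  case (Suc m)
  show ?case
  proof (cases "m = 0")
    case True
    have E0: "E 0 \<in> carrier_mat (e 0) (e (Suc 0))" using Suc.prems by auto
    have "foldl (\<lambda>M k. M * E k) (1\<^sub>m (e 0)) [0..<Suc m] = E 0"
      using True left_mult_one_mat[OF E0] by simp
    then show ?thesis using True Suc.prems r by auto
  next
    case False
    have Pc: "foldl (\<lambda>M k. M * E k) (1\<^sub>m (e 0)) [0..<m] \<in> carrier_mat (e 0) (e m)"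
      by (rule foldl_carrier) (use Suc.prems in auto)
    have Em: "E m \<in> carrier_mat (e m) (e (Suc m))" using Suc.prems by auto
    define ch where "ch = (\<forall>k. Suc k < m \<longrightarrow> \<beta> k = \<alpha> (Suc k))"
    have bm: "\<beta> (m - 1) < e m"
    proof -
      have "m - 1 < Suc m" by simp
      with Suc.prems(2) have "\<beta> (m - 1) < e (Suc (m - 1))" by blast
      moreover have "Suc (m - 1) = m" using False by simp
      ultimately show ?thesis by simp
    qed
    have "foldl (\<lambda>M k. M * E k) (1\<^sub>m (e 0)) [0..<Suc m] $$ (r,c) =
      (\<Sum>x<e m. foldl (\<lambda>M k. M * E k) (1\<^sub>m (e 0)) [0..<m] $$ (r,x) * E m $$ (x,c))"
      unfolding foldl_upt_Suc by (rule mult_entry[OF Pc Em r Suc.prems(4)])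
    also have "\<dots> = (\<Sum>x<e m. if x = \<beta> (m - 1) then
         (if r = \<alpha> 0 \<and> ch \<and> \<beta> (m - 1) = \<alpha> m \<and> c = \<beta> m then 1 else 0) else 0)"
    proof (intro sum.cong refl)
      fix x assume x: "x \<in> {..<e m}"
      have h1: "foldl (\<lambda>M k. M * E k) (1\<^sub>m (e 0)) [0..<m] $$ (r,x) =
         (if r = \<alpha> 0 \<and> x = \<beta> (m - 1) \<and> ch then 1 else 0)"
        unfolding ch_def by (rule Suc.hyps) (use Suc.prems x False in auto)
      have h2: "E m $$ (x,c) = (if x = \<alpha> m \<and> c = \<beta> m then 1 else 0)"
        using Suc.prems x by auto
      show "foldl (\<lambda>M k. M * E k) (1\<^sub>m (e 0)) [0..<m] $$ (r,x) * E m $$ (x,c) =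
         (if x = \<beta> (m - 1) then
         (if r = \<alpha> 0 \<and> ch \<and> \<beta> (m - 1) = \<alpha> m \<and> c = \<beta> m then 1 else 0) else 0)"
        unfolding h1 h2 by auto
    qed
    also have "\<dots> = (if r = \<alpha> 0 \<and> ch \<and> \<beta> (m - 1) = \<alpha> m \<and> c = \<beta> m then 1 else 0)"
      using bm by simp
    also have "(r = \<alpha> 0 \<and> ch \<and> \<beta> (m - 1) = \<alpha> m \<and> c = \<beta> m) \<longleftrightarrow>
       (r = \<alpha> 0 \<and> c = \<beta> (Suc m - 1) \<and> (\<forall>k. Suc k < Suc m \<longrightarrow> \<beta> k = \<alpha> (Suc k)))"
    proof -
      have "(\<forall>k. Suc k < Suc m \<longrightarrow> \<beta> k = \<alpha> (Suc k)) \<longleftrightarrow> ch \<and> \<beta> (m - 1) = \<alpha> m"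
      proof
        assume H: "\<forall>k. Suc k < Suc m \<longrightarrow> \<beta> k = \<alpha> (Suc k)"
        have sm: "Suc (m - 1) = m" using False by simp
        have "\<beta> (m - 1) = \<alpha> (Suc (m - 1))" using H False by simp
        then have "\<beta> (m - 1) = \<alpha> m" by (simp only: sm)
        moreover have ch using H unfolding ch_def by simp
        ultimately show "ch \<and> \<beta> (m - 1) = \<alpha> m" by simp
      next
        assume H: "ch \<and> \<beta> (m - 1) = \<alpha> m"
        show "\<forall>k. Suc k < Suc m \<longrightarrow> \<beta> k = \<alpha> (Suc k)"
        proof (intro allI impI)
          fix k assume k: "Suc k < Suc m"
          show "\<beta> k = \<alpha> (Suc k)"
          proof (cases "Suc k < m")
            case True then show ?thesis using H unfolding ch_def by simp
          next
            case F2: False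
            then have "k = m - 1" "Suc k = m" using k by auto
            then show ?thesis using H by simp
          qed
        qed
      qed
      then show ?thesis by auto
    qed
    finally show ?thesis .
  qed
qed


lemma sum_PiE_split:
  fixes u v :: "('a \<Rightarrow> 'b) \<Rightarrow> complex"
  assumes disj: "A \<inter> B = {}"
  shows "(\<Sum>x\<in>PiE (A \<union> B) F. u (restrict x A) * v (restrict x B)) =
    (\<Sum>y\<in>PiE A F. u y) * (\<Sum>z\<in>PiE B F. v z)"
proof -
  define h where "h x = (restrict x A, restrict x B)" for x :: "'a \<Rightarrow> 'b"
  define h' where "h' p = (\<lambda>k. if k \<in> A then fst p k else snd p k)" for p :: "('a \<Rightarrow> 'b) \<times> ('a \<Rightarrow> 'b)"
  have bij: "bij_betw h (PiE (A \<union> B) F) (PiE A F \<times> PiE B F)"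
  proof (rule bij_betw_byWitness[where f' = h'])
    show "\<forall>a\<in>PiE (A \<union> B) F. h' (h a) = a"
      by (auto simp: h_def h'_def fun_eq_iff PiE_def extensional_def)
    show "\<forall>a'\<in>PiE A F \<times> PiE B F. h (h' a') = a'"
      using disj by (auto simp: h_def h'_def fun_eq_iff PiE_def extensional_def restrict_def)
    show "h ` PiE (A \<union> B) F \<subseteq> PiE A F \<times> PiE B F"
      by (auto simp: h_def PiE_def Pi_def)
    show "h' ` (PiE A F \<times> PiE B F) \<subseteq> PiE (A \<union> B) F"
      by (auto simp: h'_def PiE_def Pi_def extensional_def)
  qed
  have "(\<Sum>y\<in>PiE A F. u y) * (\<Sum>z\<in>PiE B F. v z) = (\<Sum>p\<in>PiE A F \<times> PiE B F. u (fst p) * v (snd p))"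
    by (simp add: sum_product sum.cartesian_product case_prod_beta)
  also have "\<dots> = (\<Sum>x\<in>PiE (A \<union> B) F. u (fst (h x)) * v (snd (h x)))"
    by (rule sum.reindex_bij_betw[OF bij, symmetric])
  finally show ?thesis by (simp add: h_def)
qed

definition al :: "(nat \<Rightarrow> nat) \<Rightarrow> (nat \<Rightarrow> nat) \<Rightarrow> nat \<Rightarrow> nat" where
  "al t s n = (if even n then t n else s n)"
definition be :: "nat \<Rightarrow> (nat \<Rightarrow> nat) \<Rightarrow> (nat \<Rightarrow> nat) \<Rightarrow> nat \<Rightarrow> nat" where
  "be N t s n = (if even n then t (Suc n mod N) else s (Suc n mod N))"

lemma chain_iff:
  fixes t s :: "nat \<Rightarrow> nat"
  assumes t: "t \<in> PiE {..<N} F" and s: "s \<in> PiE {..<N} F" and N: "0 < N"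
    and odd0: "odd N \<Longrightarrow> t 0 = s 0"
  shows "(al t s 0 = be N t s (N - 1) \<and> (\<forall>k. Suc k < N \<longrightarrow> be N t s k = al t s (Suc k)))
     \<longleftrightarrow> t = s"
proof
  assume t_s: "t = s"
  have "Suc (N - 1) = N" using N by simp
  then show "al t s 0 = be N t s (N - 1) \<and> (\<forall>k. Suc k < N \<longrightarrow> be N t s k = al t s (Suc k))"
    unfolding t_s al_def be_def by auto
next
  assume H: "al t s 0 = be N t s (N - 1) \<and> (\<forall>k. Suc k < N \<longrightarrow> be N t s k = al t s (Suc k))"
  show "t = s"
  proof (rule PiE_ext[OF t s])
    fix m assume m: "m \<in> {..<N}"
    show "t m = s m"
    proof (cases m)
      case 0
      show ?thesis
      proof (cases "even N")
        case True
        have sN: "Suc (N - 1) = N" using N by simp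
        have "odd (N - 1)" using True N by simp
        then have "be N t s (N - 1) = s 0" unfolding be_def using sN by simp
        then show ?thesis using H 0 by (simp add: al_def)
      next
        case False then show ?thesis using odd0 0 by simp
      qed
    next
      case (Suc k)
      then have "Suc k < N" using m by simp
      then have "be N t s k = al t s (Suc k)" using H by blast
      then show ?thesis using Suc \<open>Suc k < N\<close> by (auto simp: al_def be_def split: if_splits)
    qed
  qed
qed


lemma surj_tensor:
  assumes inj: "injective_tensor N d Dim A n"
    and tens: "\<forall>i<d. A n i \<in> carrier_mat (Dim n) (Dim (Suc n mod N))"
    and a: "a < Dim n" and b: "b < Dim (Suc n mod N)"
  shows "\<exists>c. \<forall>x<Dim n. \<forall>y<Dim (Suc n mod N).
           (\<Sum>i<d. c i * A n i $$ (x,y)) = (if x = a \<and> y = b then 1 else 0)"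
proof -
  define p where "p = Dim n"
  define q where "q = Dim (Suc n mod N)"
  define U where "U = {..<p} \<times> {..<q}"
  have "\<exists>c. \<forall>u\<in>U. (\<Sum>i<d. c i * A n i $$ u) = (if u = (a,b) then 1 else 0)"
  proof (rule dual_surj)
    show "finite U" by (simp add: U_def)
    show "(a,b) \<in> U" using a b by (simp add: U_def p_def q_def)
    fix X assume X: "\<forall>i<d. (\<Sum>u\<in>U. X u * A n i $$ u) = 0"
    define Xm where "Xm = mat q p (\<lambda>(y,x). X (x,y))"
    have Xmc: "Xm \<in> carrier_mat q p" by (simp add: Xm_def)
    have "\<forall>i<d. mat_trace (Xm * A n i) = 0"
    proof (intro allI impI)
      fix i assume i: "i < d"
      have Ai: "A n i \<in> carrier_mat p q" using tens i by (simp add: p_def q_def)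
      have "mat_trace (Xm * A n i) = (\<Sum>y<q. (Xm * A n i) $$ (y,y))"
        using Xmc Ai by (simp add: mat_trace_def)
      also have "\<dots> = (\<Sum>y<q. \<Sum>x<p. X (x,y) * A n i $$ (x,y))"
        by (intro sum.cong refl, subst mult_entry[OF Xmc Ai]) (auto simp: Xm_def)
      also have "\<dots> = (\<Sum>x<p. \<Sum>y<q. X (x,y) * A n i $$ (x,y))"
        by (rule sum.swap)
      also have "\<dots> = (\<Sum>u\<in>U. X u * A n i $$ u)"
        by (simp add: U_def sum.cartesian_product case_prod_beta)
      also have "\<dots> = 0" using X i by simp
      finally show "mat_trace (Xm * A n i) = 0" .
    qed
    then have "Xm = 0\<^sub>m q p" using inj Xmc by (simp add: injective_tensor_def p_def q_def)
    then show "\<forall>u\<in>U. X u = 0"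
      by (auto simp: U_def Xm_def) (metis case_prod_conv index_mat(1) index_zero_mat(1))
  qed
  then obtain c where c: "\<forall>u\<in>U. (\<Sum>i<d. c i * A n i $$ u) = (if u = (a,b) then 1 else 0)" by blast
  show ?thesis
    by (intro exI[of _ c] allI impI) (use c in \<open>auto simp: U_def p_def q_def\<close>)
qed


theorem proposition5:
  fixes d D :: nat
  shows "\<exists>N0. \<forall>N \<ge> N0. \<forall>(Dim :: nat \<Rightarrow> nat) (A :: nat \<Rightarrow> nat \<Rightarrow> complex mat).
     mps_tensors_ok N d Dim A \<and> (\<forall>n<N. 0 < Dim n) \<and>
     (\<forall>n<N. injective_tensor N d Dim A n) \<and>
     exact_MPS_up N d (mps_coeff N Dim A) D
     \<longrightarrow> (\<Prod>n \<in> {(if even N then 0 else 1)..<N}. Dim n) \<le> D"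
proof (intro exI[of _ 1] allI impI)
  fix N :: nat and Dim :: "nat \<Rightarrow> nat" and A :: "nat \<Rightarrow> nat \<Rightarrow> complex mat"
  assume N1: "1 \<le> N"
  assume H: "mps_tensors_ok N d Dim A \<and> (\<forall>n<N. 0 < Dim n) \<and>
     (\<forall>n<N. injective_tensor N d Dim A n) \<and> exact_MPS_up N d (mps_coeff N Dim A) D"
  have N: "0 < N" using N1 by simp
  have tens: "\<forall>n<N. \<forall>i<d. A n i \<in> carrier_mat (Dim n) (Dim (Suc n mod N))"
    using H by (simp add: mps_tensors_ok_def)
  have pos: "\<forall>n<N. 0 < Dim n" using H by simp
  have injt: "\<forall>n<N. injective_tensor N d Dim A n" using H by simp
  have up: "exact_MPS_up N d (mps_coeff N Dim A) D" using H by simp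
  define e where "e k = Dim (k mod N)" for k
  have ek: "e k = Dim k" if "k < N" for k using that by (simp add: e_def)
  have eS: "e (Suc k) = Dim (Suc k mod N)" for k by (simp add: e_def)
  have e0: "e 0 = Dim 0" by (simp add: e_def)
  have eN: "e N = e 0" by (simp add: e_def)
  have tens': "\<forall>k<N. \<forall>i<d. A k i \<in> carrier_mat (e k) (e (Suc k))"
    using tens by (simp add: ek eS)

  have "\<forall>p. \<exists>c. (fst p < N \<and> fst (snd p) < Dim (fst p) \<and> snd (snd p) < Dim (Suc (fst p) mod N)) \<longrightarrow>
     (\<forall>x<Dim (fst p). \<forall>y<Dim (Suc (fst p) mod N).
           (\<Sum>i<d. c i * A (fst p) i $$ (x,y)) = (if x = fst (snd p) \<and> y = snd (snd p) then 1 else 0))"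
  proof
    fix p :: "nat \<times> nat \<times> nat"
    obtain n a b where p: "p = (n, a, b)" by (cases p) auto
    show "\<exists>c. (fst p < N \<and> fst (snd p) < Dim (fst p) \<and> snd (snd p) < Dim (Suc (fst p) mod N)) \<longrightarrow>
     (\<forall>x<Dim (fst p). \<forall>y<Dim (Suc (fst p) mod N).
           (\<Sum>i<d. c i * A (fst p) i $$ (x,y)) = (if x = fst (snd p) \<and> y = snd (snd p) then 1 else 0))"
    proof (cases "n < N \<and> a < Dim n \<and> b < Dim (Suc n mod N)")
      case True
      then have "n < N" "a < Dim n" "b < Dim (Suc n mod N)" by auto
      from surj_tensor[of N d Dim A n, OF _ _ this(2,3)] injt tens \<open>n < N\<close>
      obtain c where c: "\<forall>x<Dim n. \<forall>y<Dim (Suc n mod N).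
           (\<Sum>i<d. c i * A n i $$ (x,y)) = (if x = a \<and> y = b then 1 else 0)" by blast
      show ?thesis unfolding p fst_conv snd_conv using c by blast
    next
      case False
      then show ?thesis unfolding p by auto
    qed
  qed
  then have "\<exists>V. \<forall>p. (fst p < N \<and> fst (snd p) < Dim (fst p) \<and> snd (snd p) < Dim (Suc (fst p) mod N)) \<longrightarrow>
     (\<forall>x<Dim (fst p). \<forall>y<Dim (Suc (fst p) mod N).
           (\<Sum>i<d. V p i * A (fst p) i $$ (x,y)) = (if x = fst (snd p) \<and> y = snd (snd p) then 1 else 0))"
    by (rule choice)
  then obtain V where V: "\<forall>p. (fst p < N \<and> fst (snd p) < Dim (fst p) \<and> snd (snd p) < Dim (Suc (fst p) mod N)) \<longrightarrow>
     (\<forall>x<Dim (fst p). \<forall>y<Dim (Suc (fst p) mod N).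
           (\<Sum>i<d. V p i * A (fst p) i $$ (x,y)) = (if x = fst (snd p) \<and> y = snd (snd p) then 1 else 0))"
    by blast
  define v where "v n a b = V (n, a, b)" for n a b
  have v: "(\<Sum>i<d. v n a b i * A n i $$ (x,y)) = (if x = a \<and> y = b then 1 else 0)"
    if "n < N" "a < Dim n" "b < Dim (Suc n mod N)" "x < Dim n" "y < Dim (Suc n mod N)" for n a b x y
    using spec[OF V, of "(n,a,b)"] that by (simp add: v_def)

  define S where "S = {n. n < N \<and> even n}"
  define Sc where "Sc = {n. n < N \<and> odd n}"
  define I0 where "I0 = (if even N then 0 else 1::nat)"
  define T where "T = PiE {..<N} (\<lambda>n. if I0 \<le> n then {..<Dim n} else {0::nat})"
  define C where "C = PiE {..<N} (\<lambda>_::nat. {..<d})"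
  define w where "w t s n = v n (al t s n) (be N t s n)" for t s n
  define Bm where "Bm t s k = mat (e k) (e (Suc k)) (\<lambda>(x,y). \<Sum>i<d. w t s k i * A k i $$ (x,y))" for t s k
  define P where "P t s = foldl (\<lambda>M k. M * Bm t s k) (1\<^sub>m (e 0)) [0..<N]" for t s
  have SU: "S \<subseteq> {0..<N}" by (auto simp: S_def)
  obtain f g where fg: "\<And>idx. (\<forall>k<N. idx k < d) \<Longrightarrow> mps_coeff N Dim A idx =
     (\<Sum>j<D. f j (restr S idx) * g j (restr ({0..<N} - S) idx))"
    using up SU unfolding exact_MPS_up_def schmidt_rank_le_def by blast
  define F where "F j t = (\<Sum>y\<in>PiE S (\<lambda>_. {..<d}). (\<Prod>n\<in>S. v n (t n) (t (Suc n mod N)) (y n)) * f j (restr S y))" for j t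
  define G where "G j s = (\<Sum>z\<in>PiE Sc (\<lambda>_. {..<d}). (\<Prod>n\<in>Sc. v n (s n) (s (Suc n mod N)) (z n)) * g j (restr ({0..<N} - S) z))" for j s

  have Tlt: "t n < Dim n" if "t \<in> T" "n < N" for t n
    using that pos by (auto simp: T_def PiE_iff split: if_splits)
  have ab_ok: "al t s k < Dim k \<and> be N t s k < Dim (Suc k mod N)" if "t \<in> T" "s \<in> T" "k < N" for t s k
    using that Tlt N by (auto simp: al_def be_def)
  have Bm_c: "\<forall>k<N. Bm t s k \<in> carrier_mat (e k) (e (Suc k)) \<and>
      (\<forall>x<e k. \<forall>y<e (Suc k). Bm t s k $$ (x,y) = (\<Sum>i<d. w t s k i * A k i $$ (x,y)))" for t s
    by (simp add: Bm_def)
  have Bm_u: "\<forall>k<N. Bm t s k \<in> carrier_mat (e k) (e (Suc k)) \<and>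
      (\<forall>x<e k. \<forall>y<e (Suc k). Bm t s k $$ (x,y) = (if x = al t s k \<and> y = be N t s k then 1 else 0))"
    if "t \<in> T" "s \<in> T" for t s
    using v ab_ok[OF that] by (simp add: Bm_def w_def ek eS)
  have Pc: "P t s \<in> carrier_mat (e 0) (e 0)" for t s
    unfolding P_def by (subst eN[symmetric], rule foldl_carrier) (use Bm_c in auto)

  have Phi1: "mat_trace (P t s) = (if t = s then 1 else 0)" if ts: "t \<in> T" "s \<in> T" for t s
  proof -
    define ch where "ch = (al t s 0 = be N t s (N - 1) \<and> (\<forall>k. Suc k < N \<longrightarrow> be N t s k = al t s (Suc k)))"
    have a0: "al t s 0 < e 0" using ab_ok[OF ts N] by (simp add: e0)
    have "mat_trace (P t s) = (\<Sum>r<e 0. P t s $$ (r,r))" using Pc[of t s] by (simp add: mat_trace_def)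
    also have "\<dots> = (\<Sum>r<e 0. if r = al t s 0 then (if ch then 1 else 0) else 0)"
    proof (intro sum.cong refl)
      fix r assume r: "r \<in> {..<e 0}"
      have "P t s $$ (r,r) = (if r = al t s 0 \<and> r = be N t s (N - 1) \<and> (\<forall>k. Suc k < N \<longrightarrow> be N t s k = al t s (Suc k)) then 1 else 0)"
        unfolding P_def
        by (rule unit_prod[OF Bm_u[OF ts]]) (use ab_ok[OF ts] r N eN in \<open>auto simp: eS\<close>)
      then show "P t s $$ (r,r) = (if r = al t s 0 then (if ch then 1 else 0) else 0)"
        by (auto simp: ch_def)
    qed
    also have "\<dots> = (if ch then 1 else 0)" using a0 by simp
    also have "ch \<longleftrightarrow> t = s" unfolding ch_def
    proof (rule chain_iff[OF ts[unfolded T_def] N])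
      assume "odd N"
      then have "I0 = 1" by (simp add: I0_def)
      have "t 0 \<in> (if I0 \<le> 0 then {..<Dim 0} else {0})" "s 0 \<in> (if I0 \<le> 0 then {..<Dim 0} else {0})"
        using ts N PiE_mem[of _ "{..<N}" "\<lambda>n. if I0 \<le> n then {..<Dim n} else {0::nat}" 0]
        by (auto simp: T_def)
      then show "t 0 = s 0" using \<open>I0 = 1\<close> by simp
    qed
    finally show ?thesis .
  qed

  have Phi2: "mat_trace (P t s) = (\<Sum>idx\<in>C. (\<Prod>n<N. w t s n (idx n)) * mps_coeff N Dim A idx)" for t s
  proof -
    define PA where "PA idx = foldl (\<lambda>M k. M * A k (idx k)) (1\<^sub>m (e 0)) [0..<N]" for idx
    have PAc: "PA idx \<in> carrier_mat (e 0) (e 0)" if "idx \<in> C" for idx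
    proof -
      have "PA idx \<in> carrier_mat (e 0) (e N)"
        unfolding PA_def
      proof (rule foldl_carrier)
        show "\<forall>k<N. A k (idx k) \<in> carrier_mat (e k) (e (Suc k))"
          using tens' that PiE_mem[of idx "{..<N}" "\<lambda>_. {..<d}"] by (auto simp: C_def)
      qed simp
      then show ?thesis using eN by simp
    qed
    have mc: "mps_coeff N Dim A idx = (\<Sum>r<e 0. PA idx $$ (r,r))" if "idx \<in> C" for idx
      using PAc[OF that] by (simp add: mps_coeff_def mat_trace_def PA_def e0)
    have "mat_trace (P t s) = (\<Sum>r<e 0. P t s $$ (r,r))" using Pc[of t s] by (simp add: mat_trace_def)
    also have "\<dots> = (\<Sum>r<e 0. \<Sum>idx\<in>C. (\<Prod>n<N. w t s n (idx n)) * PA idx $$ (r,r))"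
    proof (intro sum.cong refl)
      fix r assume r: "r \<in> {..<e 0}"
      show "P t s $$ (r,r) = (\<Sum>idx\<in>C. (\<Prod>n<N. w t s n (idx n)) * PA idx $$ (r,r))"
        unfolding P_def PA_def C_def
        by (rule multilin[OF tens' Bm_c]) (use r eN in auto)
    qed
    also have "\<dots> = (\<Sum>idx\<in>C. (\<Prod>n<N. w t s n (idx n)) * (\<Sum>r<e 0. PA idx $$ (r,r)))"
      by (simp add: sum_distrib_left sum.swap[of _ C])
    also have "\<dots> = (\<Sum>idx\<in>C. (\<Prod>n<N. w t s n (idx n)) * mps_coeff N Dim A idx)"
      by (intro sum.cong refl) (simp add: mc)
    finally show ?thesis .
  qed

  have Phi3: "(\<Sum>idx\<in>C. (\<Prod>n<N. w t s n (idx n)) * mps_coeff N Dim A idx) = (\<Sum>j<D. F j t * G j s)" for t s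
  proof -
    define PS where "PS y = (\<Prod>n\<in>S. v n (t n) (t (Suc n mod N)) (y n))" for y :: "nat \<Rightarrow> nat"
    define QS where "QS z = (\<Prod>n\<in>Sc. v n (s n) (s (Suc n mod N)) (z n))" for z :: "nat \<Rightarrow> nat"
    have disj: "S \<inter> Sc = {}" by (auto simp: S_def Sc_def)
    have un: "{..<N} = S \<union> Sc" by (auto simp: S_def Sc_def)
    have Sc_eq: "{0..<N} - S = Sc" by (auto simp: S_def Sc_def)
    have W: "(\<Prod>n<N. w t s n (idx n)) = PS (restrict idx S) * QS (restrict idx Sc)" for idx
    proof -
      have "(\<Prod>n<N. w t s n (idx n)) = (\<Prod>n\<in>S. w t s n (idx n)) * (\<Prod>n\<in>Sc. w t s n (idx n))"
        unfolding un by (rule prod.union_disjoint) (auto simp: S_def Sc_def disj)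
      also have "(\<Prod>n\<in>S. w t s n (idx n)) = PS (restrict idx S)"
        unfolding PS_def by (intro prod.cong refl) (auto simp: S_def w_def al_def be_def)
      also have "(\<Prod>n\<in>Sc. w t s n (idx n)) = QS (restrict idx Sc)"
        unfolding QS_def by (intro prod.cong refl) (auto simp: Sc_def w_def al_def be_def)
      finally show ?thesis .
    qed
    have rS: "restr S idx = restr S (restrict idx S)" for idx
      by (auto simp: restr_def fun_eq_iff)
    have rSc: "restr Sc idx = restr Sc (restrict idx Sc)" for idx
      by (auto simp: restr_def fun_eq_iff)
    have "(\<Sum>idx\<in>C. (\<Prod>n<N. w t s n (idx n)) * mps_coeff N Dim A idx) =
       (\<Sum>idx\<in>C. \<Sum>j<D. (PS (restrict idx S) * f j (restr S (restrict idx S))) *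
                          (QS (restrict idx Sc) * g j (restr Sc (restrict idx Sc))))"
    proof (intro sum.cong refl)
      fix idx assume idx: "idx \<in> C"
      have "\<forall>k<N. idx k < d" using idx by (auto simp: C_def PiE_iff)
      then show "(\<Prod>n<N. w t s n (idx n)) * mps_coeff N Dim A idx =
         (\<Sum>j<D. (PS (restrict idx S) * f j (restr S (restrict idx S))) *
                          (QS (restrict idx Sc) * g j (restr Sc (restrict idx Sc))))"
        by (simp add: fg W Sc_eq sum_distrib_left rS[symmetric] rSc[symmetric] mult_ac)
    qed
    also have "\<dots> = (\<Sum>j<D. \<Sum>idx\<in>C. (PS (restrict idx S) * f j (restr S (restrict idx S))) *
                          (QS (restrict idx Sc) * g j (restr Sc (restrict idx Sc))))"
      by (rule sum.swap)
    also have "\<dots> = (\<Sum>j<D. F j t * G j s)"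
    proof (intro sum.cong refl)
      fix j
      show "(\<Sum>idx\<in>C. (PS (restrict idx S) * f j (restr S (restrict idx S))) *
                          (QS (restrict idx Sc) * g j (restr Sc (restrict idx Sc)))) = F j t * G j s"
        unfolding C_def un F_def G_def Sc_eq PS_def[symmetric] QS_def[symmetric]
        by (rule sum_PiE_split[OF disj, of "\<lambda>y. PS y * f j (restr S y)" "\<lambda>z. QS z * g j (restr Sc z)"])
    qed
    finally show ?thesis .
  qed

  have finT: "finite T" by (simp add: T_def finite_PiE)
  have "card T \<le> D"
  proof (rule count_bound[OF finT])
    fix t s assume "t \<in> T" "s \<in> T"
    then show "(\<Sum>j<D. F j t * G j s) = (if t = s then 1 else 0)"
      using Phi1 Phi2 Phi3 by metis
  qed
  moreover have "card T = (\<Prod>n \<in> {(if even N then 0 else 1)..<N}. Dim n)"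
  proof -
    have "card T = (\<Prod>n<N. card (if I0 \<le> n then {..<Dim n} else {0::nat}))"
      by (simp add: T_def card_PiE)
    also have "\<dots> = (\<Prod>n<N. if I0 \<le> n then Dim n else 1)"
      by (intro prod.cong refl) auto
    also have "\<dots> = (\<Prod>n\<in>{..<N} \<inter> {n. I0 \<le> n}. Dim n)"
      by (simp add: prod.If_cases)
    also have "{..<N} \<inter> {n. I0 \<le> n} = {I0..<N}" by auto
    finally show ?thesis by (simp add: I0_def)
  qed
  ultimately show "(\<Prod>n \<in> {(if even N then 0 else 1)..<N}. Dim n) \<le> D" by simp
qed

end
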